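(* Let $(\mathcal M,X,\bot)$ be an accessible concurrent system. The following are equivalent: (1) the system is irreducible; (2) for some state $\alpha$ and some letter $a$, there exists an $a$-rooted linking execution from $\alpha$; (3) for every state $\alpha$ and every letter $a$, there exists an $a$-rooted linking execution from $\alpha$.
   Context: A trace monoid $\mathcal M=\mathcal M(\Sigma,I)$ is $\langle\Sigma\mid ab=ba\ ((a,b)\in I)\rangle$, $\Sigma$ finite, $I$ irreflexive symmetric; $D=(\Sigma\times\Sigma)\setminus I$; $\mathcal M$ is irreducible if $(\Sigma,D)$ is connected. A concurrent system $(\mathcal M,X,\bot)$: $X$ finite, $\bot\notin X$, right action of $\mathcal M$ on $X\cup\{\bot\}$ with $\bot\cdot x=\bot$. Accessible: for all $\alpha,\beta\in X$ some $x$ with $\alpha\cdot x=\beta$. Alive: for every $\alpha$ and $a\in\Sigma$ some $x$ containing $a$ with $\alpha\cdot x\ne\bot$. Irreducible: accessible, alive and $\mathcal M$ irreducible. A linking sequence from $\alpha$ is a sequence of letters $a_1,\dots,a_p$ such that, for some indices $1\le j_1<\dots<j_q\le p$: $\alpha\cdot(a_1\cdots a_p)\ne\bot$; $(a_{j_k},a_{j_{k+1}})\in D$ for $k=1,\dots,q-1$; and every letter of $\Sigma$ occurs in $(a_{j_1},\dots,a_{j_q})$. It is $a$-rooted if the indices can be chosen with $a_{j_1}=a$. A (resp. $a$-rooted) linking execution from $\alpha$ is the image in $\mathcal M$ of a (resp. $a$-rooted) linking sequence from $\alpha$. *)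

theory Defs
  imports Main
begin

text \<open>Trace monoid M(Sigma,I): alphabet Sigma (finite), independence relation I
 (irreflexive, symmetric on Sigma). Dependence D = Sigma x Sigma - I.\<close>

definition trace_alphabet :: "'a set \<Rightarrow> ('a \<times> 'a) set \<Rightarrow> bool" where
  "trace_alphabet Sig I \<longleftrightarrow> finite Sig \<and> I \<subseteq> Sig \<times> Sig \<and> irrefl I \<and> sym I"

definition dep :: "'a set \<Rightarrow> ('a \<times> 'a) set \<Rightarrow> ('a \<times> 'a) set" where
  "dep Sig I = (Sig \<times> Sig) - I"

definition trace_irreducible :: "'a set \<Rightarrow> ('a \<times> 'a) set \<Rightarrow> bool" where
  "trace_irreducible Sig I \<longleftrightarrow> Sig \<noteq> {} \<and> (\<forall>a\<in>Sig. \<forall>b\<in>Sig. (a, b) \<in> (dep Sig I)\<^sup>*)"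

text \<open>Right action of the trace monoid on X \<union> {bot}: bot is modelled by None.\<close>
fun run :: "('x \<Rightarrow> 'a \<Rightarrow> 'x option) \<Rightarrow> 'x option \<Rightarrow> 'a list \<Rightarrow> 'x option" where
  "run step s [] = s"
| "run step s (c # w) = run step (Option.bind s (\<lambda>x. step x c)) w"

text \<open>A concurrent system (M, X, bot): X finite, the letters act on X \<union> {bot}
 (mapping X into X \<union> {bot}), and the defining relations ab = ba for (a,b) in I
 are respected, so that this is a right action of the trace monoid.\<close>
definition concurrent_system ::
  "'a set \<Rightarrow> ('a \<times> 'a) set \<Rightarrow> 'x set \<Rightarrow> ('x \<Rightarrow> 'a \<Rightarrow> 'x option) \<Rightarrow> bool" where
  "concurrent_system Sig I X step \<longleftrightarrow>
     trace_alphabet Sig I \<and> finite X \<and>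
     (\<forall>x\<in>X. \<forall>c\<in>Sig. step x c = None \<or> (\<exists>y\<in>X. step x c = Some y)) \<and>
     (\<forall>x\<in>X. \<forall>(a, b)\<in>I. run step (Some x) [a, b] = run step (Some x) [b, a])"

definition cs_accessible ::
  "'a set \<Rightarrow> 'x set \<Rightarrow> ('x \<Rightarrow> 'a \<Rightarrow> 'x option) \<Rightarrow> bool" where
  "cs_accessible Sig X step \<longleftrightarrow>
     (\<forall>\<alpha>\<in>X. \<forall>\<beta>\<in>X. \<exists>w \<in> lists Sig. run step (Some \<alpha>) w = Some \<beta>)"

definition cs_alive ::
  "'a set \<Rightarrow> 'x set \<Rightarrow> ('x \<Rightarrow> 'a \<Rightarrow> 'x option) \<Rightarrow> bool" where
  "cs_alive Sig X step \<longleftrightarrow>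
     (\<forall>\<alpha>\<in>X. \<forall>a\<in>Sig. \<exists>w \<in> lists Sig. a \<in> set w \<and> run step (Some \<alpha>) w \<noteq> None)"

definition cs_irreducible ::
  "'a set \<Rightarrow> ('a \<times> 'a) set \<Rightarrow> 'x set \<Rightarrow> ('x \<Rightarrow> 'a \<Rightarrow> 'x option) \<Rightarrow> bool" where
  "cs_irreducible Sig I X step \<longleftrightarrow>
     cs_accessible Sig X step \<and> cs_alive Sig X step \<and> trace_irreducible Sig I"

definition rooted_linking_sequence ::
  "'a set \<Rightarrow> ('a \<times> 'a) set \<Rightarrow> ('x \<Rightarrow> 'a \<Rightarrow> 'x option) \<Rightarrow> 'x \<Rightarrow> 'a \<Rightarrow> 'a list \<Rightarrow> bool" where
  "rooted_linking_sequence Sig I step \<alpha> a w \<longleftrightarrow>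
     w \<in> lists Sig \<and> run step (Some \<alpha>) w \<noteq> None \<and>
     (\<exists>js :: nat list.
        js \<noteq> [] \<and> sorted_wrt (<) js \<and> (\<forall>j\<in>set js. j < length w) \<and>
        (\<forall>k. Suc k < length js \<longrightarrow> (w ! (js ! k), w ! (js ! Suc k)) \<in> dep Sig I) \<and>
        Sig \<subseteq> set (map (\<lambda>j. w ! j) js) \<and>
        w ! (js ! 0) = a)"

text \<open>An a-rooted linking execution from alpha exists iff an a-rooted linking
 sequence from alpha exists (executions are images of sequences in M).\<close>
definition has_rooted_linking_execution ::
  "'a set \<Rightarrow> ('a \<times> 'a) set \<Rightarrow> ('x \<Rightarrow> 'a \<Rightarrow> 'x option) \<Rightarrow> 'x \<Rightarrow> 'a \<Rightarrow> bool" where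
  "has_rooted_linking_execution Sig I step \<alpha> a \<longleftrightarrow>
     (\<exists>w. rooted_linking_sequence Sig I step \<alpha> a w)"

end

theory Submission
  imports Defs
begin

lemma run_None[simp]: "run step None w = None"
  by (induction w) auto

lemma run_append: "run step s (u @ v) = run step (run step s u) v"
  by (induction u arbitrary: s) auto

lemma run_in_X:
  assumes "\<forall>x\<in>X. \<forall>c\<in>Sig. step x c = None \<or> (\<exists>y\<in>X. step x c = Some y)"
  shows "x \<in> X \<Longrightarrow> w \<in> lists Sig \<Longrightarrow> run step (Some x) w = Some y \<Longrightarrow> y \<in> X"
proof (induction w arbitrary: x)
  case Nil then show ?case by simp
next
  case (Cons c w)
  show ?case
  proof (cases "step x c")
    case None then show ?thesis using Cons by simp
  next
    case (Some z)
    then have "z \<in> X" using assms Cons.prems by force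
    then show ?thesis using Cons Some by simp
  qed
qed

lemma embed_list:
  assumes inv: "\<forall>x\<in>X. \<forall>c\<in>Sig. step x c = None \<or> (\<exists>y\<in>X. step x c = Some y)"
    and alive: "cs_alive Sig X step"
  shows "set L \<subseteq> Sig \<Longrightarrow> \<alpha> \<in> X \<Longrightarrow> \<exists>w js. w \<in> lists Sig \<and> run step (Some \<alpha>) w \<noteq> None
     \<and> sorted_wrt (<) js \<and> (\<forall>j\<in>set js. j < length w) \<and> map (\<lambda>j. w ! j) js = L"
proof (induction L arbitrary: \<alpha>)
  case Nil
  then show ?case by (intro exI[of _ "[]"]) auto
next
  case (Cons c L)
  have "c \<in> Sig" using Cons.prems by simp
  then obtain w1 where w1: "w1 \<in> lists Sig" "c \<in> set w1" "run step (Some \<alpha>) w1 \<noteq> None"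
    using alive Cons.prems(2) unfolding cs_alive_def by meson
  then obtain \<beta> where b: "run step (Some \<alpha>) w1 = Some \<beta>" by auto
  have "\<beta> \<in> X" using run_in_X[OF inv Cons.prems(2) w1(1) b] .
  from Cons.IH[OF _ this] Cons.prems obtain w2 js2 where
    w2: "w2 \<in> lists Sig" "run step (Some \<beta>) w2 \<noteq> None" "sorted_wrt (<) js2"
      "\<forall>j\<in>set js2. j < length w2" "map (\<lambda>j. w2 ! j) js2 = L" by auto
  from w1(2) obtain i where i: "i < length w1" "w1 ! i = c" by (auto simp: in_set_conv_nth)
  show ?case
  proof (intro exI[of _ "w1 @ w2"] exI[of _ "i # map (\<lambda>j. j + length w1) js2"] conjI)
    show "w1 @ w2 \<in> lists Sig" using w1 w2 by auto
    show "run step (Some \<alpha>) (w1 @ w2) \<noteq> None" using b w2 by (simp add: run_append)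
    show "sorted_wrt (<) (i # map (\<lambda>j. j + length w1) js2)"
      using w2(3) i by (auto simp: sorted_wrt_map)
    show "\<forall>j\<in>set (i # map (\<lambda>j. j + length w1) js2). j < length (w1 @ w2)"
      using w2(4) i by auto
    show "map (\<lambda>j. (w1 @ w2) ! j) (i # map (\<lambda>j. j + length w1) js2) = c # L"
      using i w2(5) by (auto simp: nth_append)
  qed
qed

lemma rtrancl_path:
  "(z, b) \<in> R\<^sup>* \<Longrightarrow> \<exists>P. P \<noteq> [] \<and> hd P = z \<and> last P = b \<and> successively (\<lambda>x y. (x, y) \<in> R) P
     \<and> set P \<subseteq> insert z (snd ` R)"
proof (induction rule: rtrancl_induct)
  case base
  then show ?case by (intro exI[of _ "[z]"]) auto
next
  case (step y c)
  then obtain P where P: "P \<noteq> []" "hd P = z" "last P = y" "successively (\<lambda>x y. (x, y) \<in> R) P"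
    "set P \<subseteq> insert z (snd ` R)" by auto
  show ?case
    using P step by (intro exI[of _ "P @ [c]"]) (auto simp: successively_append_iff image_iff, force)
qed

lemma walk_exists:
  assumes "finite S" "S \<subseteq> Sig" "a \<in> Sig" "\<forall>x\<in>Sig. \<forall>y\<in>Sig. (x, y) \<in> (dep Sig I)\<^sup>*"
  shows "\<exists>L. L \<noteq> [] \<and> hd L = a \<and> successively (\<lambda>x y. (x, y) \<in> dep Sig I) L \<and> S \<subseteq> set L
      \<and> set L \<subseteq> Sig"
  using assms(1,2)
proof (induction S rule: finite_induct)
  case empty
  then show ?case using assms by (intro exI[of _ "[a]"]) auto
next
  case (insert b S)
  then obtain L where L: "L \<noteq> []" "hd L = a" "successively (\<lambda>x y. (x, y) \<in> dep Sig I) L"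
    "S \<subseteq> set L" "set L \<subseteq> Sig" by auto
  have "last L \<in> Sig" using L by auto
  then have "(last L, b) \<in> (dep Sig I)\<^sup>*" using assms insert by auto
  from rtrancl_path[OF this] obtain P where P: "P \<noteq> []" "hd P = last L" "last P = b"
    "successively (\<lambda>x y. (x, y) \<in> dep Sig I) P" "set P \<subseteq> insert (last L) (snd ` dep Sig I)" by auto
  have PS: "set P \<subseteq> Sig" using P(5) \<open>last L \<in> Sig\<close> by (auto simp: dep_def)
  obtain p P' where PP: "P = p # P'" using P(1) by (cases P) auto
  have "successively (\<lambda>x y. (x, y) \<in> dep Sig I) (L @ P')"
    using L P PP by (auto simp: successively_append_iff successively_Cons)
  moreover have "b \<in> set (L @ P')"
    using P PP L by (cases "P' = []") auto
  ultimately show ?case using L PS PP by (intro exI[of _ "L @ P'"]) auto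
qed

lemma succ_connected:
  assumes "sym R"
  shows "successively (\<lambda>x y. (x, y) \<in> R) L \<Longrightarrow> L \<noteq> [] \<Longrightarrow>
     \<forall>y\<in>set L. (hd L, y) \<in> R\<^sup>* \<and> (y, hd L) \<in> R\<^sup>*"
proof (induction L)
  case Nil then show ?case by simp
next
  case (Cons x L)
  show ?case
  proof (cases "L = []")
    case True then show ?thesis by simp
  next
    case False
    then have r: "(x, hd L) \<in> R" using Cons.prems by (simp add: successively_Cons)
    then have r': "(hd L, x) \<in> R" using assms by (meson symD)
    have IH: "\<forall>y\<in>set L. (hd L, y) \<in> R\<^sup>* \<and> (y, hd L) \<in> R\<^sup>*"
      using Cons False by (simp add: successively_Cons)
    show ?thesis
    proof
      fix y assume "y \<in> set (x # L)"
      then consider "y = x" | "y \<in> set L" by auto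
      then show "(hd (x # L), y) \<in> R\<^sup>* \<and> (y, hd (x # L)) \<in> R\<^sup>*"
      proof cases
        case 1 then show ?thesis by simp
      next
        case 2
        then have "(hd L, y) \<in> R\<^sup>*" "(y, hd L) \<in> R\<^sup>*" using IH by auto
        moreover have "(x, y) \<in> R\<^sup>*"
          using converse_rtrancl_into_rtrancl[OF r \<open>(hd L, y) \<in> R\<^sup>*\<close>] .
        moreover have "(y, x) \<in> R\<^sup>*"
          using rtrancl_into_rtrancl[OF \<open>(y, hd L) \<in> R\<^sup>*\<close> r'] .
        ultimately show ?thesis by simp
      qed
    qed
  qed
qed

theorem proposition9:
  fixes Sig :: "'a set" and I :: "('a \<times> 'a) set" and X :: "'x set"
    and step :: "'x \<Rightarrow> 'a \<Rightarrow> 'x option"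
  assumes "concurrent_system Sig I X step"
    and "Sig \<noteq> {}" and "X \<noteq> {}"
    and "cs_accessible Sig X step"
  shows "(cs_irreducible Sig I X step
            \<longleftrightarrow> (\<exists>\<alpha>\<in>X. \<exists>a\<in>Sig. has_rooted_linking_execution Sig I step \<alpha> a))
       \<and> ((\<exists>\<alpha>\<in>X. \<exists>a\<in>Sig. has_rooted_linking_execution Sig I step \<alpha> a)
            \<longleftrightarrow> (\<forall>\<alpha>\<in>X. \<forall>a\<in>Sig. has_rooted_linking_execution Sig I step \<alpha> a))"
proof -
  have inv: "\<forall>x\<in>X. \<forall>c\<in>Sig. step x c = None \<or> (\<exists>y\<in>X. step x c = Some y)"
    and ta: "trace_alphabet Sig I" using assms(1) unfolding concurrent_system_def by auto
  have fin: "finite Sig" and symI: "sym I" using ta unfolding trace_alphabet_def by auto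
  have symD: "sym (dep Sig I)" using symI unfolding dep_def sym_def by auto
  have A: "cs_irreducible Sig I X step"
    if hA: "\<alpha> \<in> X" "a \<in> Sig" "has_rooted_linking_execution Sig I step \<alpha> a" for \<alpha> a
  proof -
    obtain w js where w: "w \<in> lists Sig" "run step (Some \<alpha>) w \<noteq> None" "js \<noteq> []"
      "\<forall>j\<in>set js. j < length w"
      "\<forall>k. Suc k < length js \<longrightarrow> (w ! (js ! k), w ! (js ! Suc k)) \<in> dep Sig I"
      "Sig \<subseteq> set (map (\<lambda>j. w ! j) js)"
      using hA(3) unfolding has_rooted_linking_execution_def rooted_linking_sequence_def by blast
    define L where "L = map (\<lambda>j. w ! j) js"
    have sL: "successively (\<lambda>x y. (x, y) \<in> dep Sig I) L"
      unfolding successively_conv_nth L_def using w(5) by auto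
    have "L \<noteq> []" using w(3) L_def by auto
    from succ_connected[OF symD sL this] have conn:
      "\<forall>y\<in>set L. (hd L, y) \<in> (dep Sig I)\<^sup>* \<and> (y, hd L) \<in> (dep Sig I)\<^sup>*" .
    have tirr: "trace_irreducible Sig I"
      unfolding trace_irreducible_def using assms(2) conn w(6) L_def
      by (meson rtrancl_trans subsetD)
    have LW: "set L \<subseteq> set w" using w(4) L_def by auto
    have alive: "cs_alive Sig X step"
      unfolding cs_alive_def
    proof (intro ballI)
      fix \<beta> b assume b: "\<beta> \<in> X" "b \<in> Sig"
      obtain u where u: "u \<in> lists Sig" "run step (Some \<beta>) u = Some \<alpha>"
        using assms(4) b hA(1) unfolding cs_accessible_def by blast
      show "\<exists>w\<in>lists Sig. b \<in> set w \<and> run step (Some \<beta>) w \<noteq> None"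
        using u w LW b L_def by (intro bexI[of _ "u @ w"]) (auto simp: run_append)
    qed
    show ?thesis unfolding cs_irreducible_def using tirr alive assms(4) by auto
  qed
  have B: "has_rooted_linking_execution Sig I step \<alpha> a"
    if irr: "cs_irreducible Sig I X step" and "\<alpha> \<in> X" "a \<in> Sig" for \<alpha> a
  proof -
    have alive: "cs_alive Sig X step" and tirr: "trace_irreducible Sig I"
      using irr unfolding cs_irreducible_def by auto
    obtain L where L: "L \<noteq> []" "hd L = a" "successively (\<lambda>x y. (x, y) \<in> dep Sig I) L"
      "Sig \<subseteq> set L" "set L \<subseteq> Sig"
      using walk_exists[OF fin subset_refl \<open>a \<in> Sig\<close>] tirr unfolding trace_irreducible_def by blast
    obtain w js where w: "w \<in> lists Sig" "run step (Some \<alpha>) w \<noteq> None"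
      "sorted_wrt (<) js" "\<forall>j\<in>set js. j < length w" "map (\<lambda>j. w ! j) js = L"
      using embed_list[OF inv alive L(5) \<open>\<alpha> \<in> X\<close>] by blast
    have len: "length js = length L" using w(5) by auto
    have nth: "\<And>k. k < length js \<Longrightarrow> w ! (js ! k) = L ! k"
    proof -
      fix k assume "k < length js"
      then have "map (\<lambda>j. w ! j) js ! k = w ! (js ! k)" by (rule nth_map)
      then show "w ! (js ! k) = L ! k" using w(5) by simp
    qed
    show ?thesis
      unfolding has_rooted_linking_execution_def rooted_linking_sequence_def
    proof (rule exI[of _ w], intro conjI exI[of _ js])
      show "w \<in> lists Sig" "run step (Some \<alpha>) w \<noteq> None" "sorted_wrt (<) js"
        "\<forall>j\<in>set js. j < length w" using w by auto
      show "js \<noteq> []" using L(1) len by auto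
      show "\<forall>k. Suc k < length js \<longrightarrow> (w ! (js ! k), w ! (js ! Suc k)) \<in> dep Sig I"
      proof (intro allI impI)
        fix k assume k: "Suc k < length js"
        have "(L ! k, L ! Suc k) \<in> dep Sig I" using L(3) k len successively_nth by fastforce
        then show "(w ! (js ! k), w ! (js ! Suc k)) \<in> dep Sig I" using nth k by simp
      qed
      show "Sig \<subseteq> set (map (\<lambda>j. w ! j) js)" using w(5) L(4) by simp
      show "w ! (js ! 0) = a" using nth[of 0] L(1,2) len by (simp add: hd_conv_nth)
    qed
  qed
  obtain \<alpha>0 where "\<alpha>0 \<in> X" using assms(3) by auto
  obtain a0 where "a0 \<in> Sig" using assms(2) by auto
  have c1: "(\<exists>\<alpha>\<in>X. \<exists>a\<in>Sig. has_rooted_linking_execution Sig I step \<alpha> a) \<Longrightarrow> cs_irreducible Sig I X step"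
    using A by auto
  have c2: "cs_irreducible Sig I X step \<Longrightarrow> (\<forall>\<alpha>\<in>X. \<forall>a\<in>Sig. has_rooted_linking_execution Sig I step \<alpha> a)"
    using B by auto
  have c3: "(\<forall>\<alpha>\<in>X. \<forall>a\<in>Sig. has_rooted_linking_execution Sig I step \<alpha> a) \<Longrightarrow>
      (\<exists>\<alpha>\<in>X. \<exists>a\<in>Sig. has_rooted_linking_execution Sig I step \<alpha> a)"
    using \<open>\<alpha>0 \<in> X\<close> \<open>a0 \<in> Sig\<close> by auto
  show ?thesis using c1 c2 c3 by meson
qed

end
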